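(* Let $\mathcal C\subseteq\mathbb F_2^n$ be a binary linear code, $\prec$ an admissible order on $[X]$, and $(N,G)$ the output of Algorithm R for $\mathcal C$ and $<_e$. Let $\to$ be one-step reduction modulo $G$ and $\overset{*}{\to}$ its reflexive-transitive closure. Then: (i) there is no infinite sequence $w_0\to w_1\to w_2\to\cdots$ (the reduction is noetherian); (ii) for any $w\in[X]$, if $w\overset{*}{\to}w_1$ and $w\overset{*}{\to}w_2$ with $w_1,w_2$ irreducible, then $w_1=w_2$; (iii) every irreducible word belongs to $N$; (iv) if $w\overset{*}{\to}w'$ then $\xi(w)=\xi(w')$.
   Context: Binary setting: $[X]$ is the free commutative monoid on $X=\{x_1,\dots,x_n\}$; $\psi:[X]\to\mathbb F_2^n$ sends $\prod x_i^{\beta_i}$ to $(\beta_i\bmod 2)_i$; $\mathcal C$ has dimension $k$ and parity check matrix $H$ ($n\times(n-k)$, $\mathcal C=\{c:cH=0\}$); syndrome $\xi(w)=\psi(w)H$. A word is standard if all exponents are $<2$; the standard form of $w$ is obtained by reducing all exponents mod 2. $\mathrm{Ind}(w)=\{i:x_i\mid w\}$. Error-vector order: $u<_e w$ iff $|\mathrm{Ind}(u)|<|\mathrm{Ind}(w)|$, or equality and $u\prec w$. Algorithm R: keep a list $L$ of words sorted increasingly by $<_e$, a set $N$ and a set $G$ of binomials; initially $L=(1)$, $N=G=\emptyset$. While $L\ne\emptyset$: remove the $<_e$-smallest $w$ from $L$; if $w$ is divisible by the leading word of some binomial of $G$, discard it; otherwise, if some $w'\in N$ has $\xi(w')=\xi(w)$,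 add the binomial $w-w'$ to $G$ with leading word $T(w-w')=w$; else add $w$ to $N$ and insert all $wx$ ($x\in X$) into $L$. Output $(N,G)$. One-step reduction modulo $G$: if $w$ is not standard, $w\to$ (standard form of $w$); if $w$ is standard and $w=us$ where $u-u'\in G$ has leading word $u$, then $w\to u's$. A word is irreducible if no one-step reduction applies to it. *)

theory Defs
  imports Main "HOL-Library.Multiset" "HOL-Library.Z2"
begin

text \<open>Words of the free commutative monoid [X] on X = {x_0,...,x_(n-1)} are represented
  as finite multisets of variable indices i < n; multiplication is multiset sum,
  the empty multiset is the word 1, and u divides w iff u is a submultiset of w.\<close>

type_synonym word = "nat multiset"

definition words :: "nat \<Rightarrow> word set" where
  "words n = {w. set_mset w \<subseteq> {..<n}}"

definition psi :: "word \<Rightarrow> nat \<Rightarrow> bit" where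
  "psi w i = of_nat (count w i)"

definition syndrome :: "nat \<Rightarrow> nat \<Rightarrow> (nat \<Rightarrow> nat \<Rightarrow> bit) \<Rightarrow> word \<Rightarrow> nat \<Rightarrow> bit" where
  "syndrome n k H w = (\<lambda>j. if j < n - k then (\<Sum>i<n. psi w i * H i j) else 0)"

definition admissible :: "nat \<Rightarrow> (word \<Rightarrow> word \<Rightarrow> bool) \<Rightarrow> bool" where
  "admissible n prec \<longleftrightarrow>
     (\<forall>u\<in>words n. \<not> prec u u) \<and>
     (\<forall>u\<in>words n. \<forall>v\<in>words n. \<forall>w\<in>words n. prec u v \<longrightarrow> prec v w \<longrightarrow> prec u w) \<and>
     (\<forall>u\<in>words n. \<forall>v\<in>words n. u = v \<or> prec u v \<or> prec v u) \<and>
     (\<forall>u\<in>words n. u \<noteq> {#} \<longrightarrow> prec {#} u) \<and>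
     (\<forall>u\<in>words n. \<forall>v\<in>words n. \<forall>s\<in>words n. prec u v \<longrightarrow> prec (u + s) (v + s)) \<and>
     wf {(u, v). u \<in> words n \<and> v \<in> words n \<and> prec u v}"

definition err_less :: "(word \<Rightarrow> word \<Rightarrow> bool) \<Rightarrow> word \<Rightarrow> word \<Rightarrow> bool" where
  "err_less prec u w \<longleftrightarrow>
     card (set_mset u) < card (set_mset w) \<or>
     (card (set_mset u) = card (set_mset w) \<and> prec u w)"

text \<open>State (L, N, G): L is the (duplicate-free, sorted)
  list of pending words represented as a finite set, G a set of binomials u - u'
  represented as pairs (u, u') with leading word u.\<close>
inductive algR_step ::
  "nat \<Rightarrow> nat \<Rightarrow> (nat \<Rightarrow> nat \<Rightarrow> bit) \<Rightarrow> (word \<Rightarrow> word \<Rightarrow> bool) \<Rightarrow>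
   word set \<times> word set \<times> (word \<times> word) set \<Rightarrow>
   word set \<times> word set \<times> (word \<times> word) set \<Rightarrow> bool"
  for n k H prec where
  discard:
    "\<lbrakk> w \<in> L; \<forall>v\<in>L. v \<noteq> w \<longrightarrow> err_less prec w v;
       \<exists>(u, u')\<in>G. u \<subseteq># w \<rbrakk>
     \<Longrightarrow> algR_step n k H prec (L, N, G) (L - {w}, N, G)"
| add_binomial:
    "\<lbrakk> w \<in> L; \<forall>v\<in>L. v \<noteq> w \<longrightarrow> err_less prec w v;
       \<not> (\<exists>(u, u')\<in>G. u \<subseteq># w);
       w' \<in> N; syndrome n k H w' = syndrome n k H w \<rbrakk>
     \<Longrightarrow> algR_step n k H prec (L, N, G) (L - {w}, N, G \<union> {(w, w')})"
| add_normal: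
    "\<lbrakk> w \<in> L; \<forall>v\<in>L. v \<noteq> w \<longrightarrow> err_less prec w v;
       \<not> (\<exists>(u, u')\<in>G. u \<subseteq># w);
       \<not> (\<exists>w'\<in>N. syndrome n k H w' = syndrome n k H w) \<rbrakk>
     \<Longrightarrow> algR_step n k H prec (L, N, G)
           ((L - {w}) \<union> {w + {#i#} | i. i < n}, N \<union> {w}, G)"

definition algR_output ::
  "nat \<Rightarrow> nat \<Rightarrow> (nat \<Rightarrow> nat \<Rightarrow> bit) \<Rightarrow> (word \<Rightarrow> word \<Rightarrow> bool) \<Rightarrow>
   word set \<Rightarrow> (word \<times> word) set \<Rightarrow> bool" where
  "algR_output n k H prec N G \<longleftrightarrow>
     (algR_step n k H prec)\<^sup>*\<^sup>* ({{#}}, {}, {}) ({}, N, G)"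

definition standard :: "word \<Rightarrow> bool" where
  "standard w \<longleftrightarrow> (\<forall>i. count w i < 2)"

definition std_form :: "word \<Rightarrow> word" where
  "std_form w = mset_set {i \<in> set_mset w. odd (count w i)}"

inductive red :: "(word \<times> word) set \<Rightarrow> word \<Rightarrow> word \<Rightarrow> bool" for G where
  to_std: "\<not> standard w \<Longrightarrow> red G w (std_form w)"
| by_G: "\<lbrakk> standard w; (u, u') \<in> G; w = u + s \<rbrakk> \<Longrightarrow> red G w (u' + s)"

definition irreducible_word :: "(word \<times> word) set \<Rightarrow> word \<Rightarrow> bool" where
  "irreducible_word G w \<longleftrightarrow> \<not> (\<exists>v. red G w v)"

end

theory Submission
  imports Defs
begin

lemma of_nat_bit: "(of_nat m :: bit) = (if odd m then 1 else 0)"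
  by (induction m) auto

lemma psi_add: "psi (a + b) i = psi a i + psi b i"
  by (simp add: psi_def)

lemma syn_add: "syndrome n k H (a + b) j = syndrome n k H a j + syndrome n k H b j"
proof -
  have eq: "(\<Sum>i<n. psi (a + b) i * H i j) = (\<Sum>i<n. psi a i * H i j) + (\<Sum>i<n. psi b i * H i j)"
    by (simp only: psi_add distrib_right sum.distrib)
  show ?thesis
  proof (cases "j < n - k")
    case True
    then show ?thesis unfolding syndrome_def using eq by (simp only: if_P[OF True] if_True)
  next
    case False
    then show ?thesis unfolding syndrome_def by (simp only: if_not_P[OF False] if_False add.right_neutral)
  qed
qed

lemma fin_std: "finite {i \<in> set_mset w. odd (count w i)}" by simp

lemma count_std: "count (std_form w) i = (if odd (count w i) then 1 else 0)"
proof -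
  have c: "count (std_form w) i = (if i \<in># w \<and> odd (count w i) then 1 else 0)"
    unfolding std_form_def count_mset_set' using fin_std[of w] by simp
  have "odd (count w i) \<Longrightarrow> i \<in># w" by (intro count_inI) auto
  then show ?thesis using c by auto
qed

lemma psi_std: "psi (std_form w) i = psi w i"
  by (simp add: psi_def count_std of_nat_bit)

lemma syn_std: "syndrome n k H (std_form w) = syndrome n k H w"
  by (simp only: syndrome_def psi_std)

lemma red_syn:
  assumes "red G w v" "\<forall>(u,u')\<in>G. syndrome n k H u' = syndrome n k H u"
  shows "syndrome n k H v = syndrome n k H w"
  using assms
proof cases
  case to_std then show ?thesis by (simp add: syn_std)
next
  case (by_G u u' s)
  then have "syndrome n k H u' = syndrome n k H u" using assms(2) by auto
  then show ?thesis using by_G by (auto simp: syn_add fun_eq_iff)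
qed

lemma set_std: "set_mset (std_form w) \<subseteq> set_mset w"
  by (simp add: std_form_def)

lemma red_words:
  assumes "red G w v" "w \<in> words n" "\<forall>(u,u')\<in>G. u' \<in> words n"
  shows "v \<in> words n"
  using assms(1)
proof cases
  case to_std then show ?thesis using assms(2) set_std[of w] by (auto simp: words_def)
next
  case (by_G u u' s)
  then show ?thesis using assms by (auto simp: words_def)
qed

lemma irreducible_iff:
  "irreducible_word G w \<longleftrightarrow> standard w \<and> \<not> (\<exists>(u,u')\<in>G. u \<subseteq># w)"
proof
  assume "irreducible_word G w"
  then show "standard w \<and> \<not> (\<exists>(u,u')\<in>G. u \<subseteq># w)"
  proof (intro conjI)
    show "standard w"
    proof (rule ccontr)
      assume "\<not> standard w"
      then have "red G w (std_form w)" by (rule red.to_std)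
      then show False using \<open>irreducible_word G w\<close> unfolding irreducible_word_def by blast
    qed
    show "\<not> (\<exists>(u,u')\<in>G. u \<subseteq># w)"
    proof
      assume "\<exists>(u,u')\<in>G. u \<subseteq># w"
      then obtain u u' where uu: "(u,u') \<in> G" "u \<subseteq># w" by blast
      have e: "w = u + (w - u)" using uu(2) by simp
      have "red G w (u' + (w - u))" by (rule red.by_G[OF \<open>standard w\<close> uu(1) e])
      then show False using \<open>irreducible_word G w\<close> unfolding irreducible_word_def by blast
    qed
  qed
next
  assume "standard w \<and> \<not> (\<exists>(u,u')\<in>G. u \<subseteq># w)"
  show "irreducible_word G w"
    unfolding irreducible_word_def
  proof
    assume "\<exists>v. red G w v"
    then obtain v where "red G w v" by blast
    then show False
    proof cases
      case to_std then show False using \<open>standard w \<and> _\<close> by simp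
    next
      case (by_G u u' s)
      have G1: "(u, u') \<in> G" using by_G by simp
      have "u \<subseteq># w" using by_G by simp
      then have "\<exists>(u,u')\<in>G. u \<subseteq># w" using G1 by blast
      then show False using \<open>standard w \<and> _\<close> by simp
    qed
  qed
qed

lemma err_less_trans:
  assumes "admissible n prec" "a \<in> words n" "b \<in> words n" "c \<in> words n"
    "err_less prec a b" "err_less prec b c"
  shows "err_less prec a c"
proof -
  have tr: "\<forall>u\<in>words n. \<forall>v\<in>words n. \<forall>w\<in>words n. prec u v \<longrightarrow> prec v w \<longrightarrow> prec u w"
    using assms(1) unfolding admissible_def by blast
  show ?thesis using assms(2-6) tr unfolding err_less_def by (metis order.strict_trans order.strict_trans2 order.strict_trans1)
qed

lemma prec_divides:
  assumes "admissible n prec" "a \<in> words n" "b \<in> words n" "a \<subseteq># b" "a \<noteq> b"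
  shows "prec a b"
proof -
  define d where "d = b - a"
  have b: "b = d + a" using assms(4) by (simp add: d_def)
  have "d \<noteq> {#}" using b assms(5) by auto
  moreover have "d \<in> words n" using assms(3) b by (auto simp: words_def)
  moreover have "\<forall>u\<in>words n. u \<noteq> {#} \<longrightarrow> prec {#} u" using assms(1) unfolding admissible_def by blast
  ultimately have "prec {#} d" by blast
  moreover have mono: "\<forall>u\<in>words n. \<forall>v\<in>words n. \<forall>s\<in>words n. prec u v \<longrightarrow> prec (u + s) (v + s)"
    using assms(1) unfolding admissible_def by blast
  moreover have "{#} \<in> words n" by (simp add: words_def)
  ultimately have "prec ({#} + a) (d + a)" using assms(2) \<open>d \<in> words n\<close> by blast
  then show ?thesis using b by simp
qed

lemma err_less_add:
  assumes "admissible n prec" "w \<in> words n" "i < n"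
  shows "err_less prec w (w + {#i#})"
proof (cases "i \<in># w")
  case True
  then have "set_mset (w + {#i#}) = set_mset w" by auto
  moreover have "prec w (w + {#i#})"
    by (rule prec_divides[OF assms(1,2)]) (use assms in \<open>auto simp: words_def\<close>)
  ultimately show ?thesis by (simp add: err_less_def)
next
  case False
  then have "set_mset (w + {#i#}) = insert i (set_mset w)" by auto
  then show ?thesis using False by (simp add: err_less_def)
qed


definition Inv :: "nat \<Rightarrow> nat \<Rightarrow> (nat \<Rightarrow> nat \<Rightarrow> bit) \<Rightarrow> (word \<Rightarrow> word \<Rightarrow> bool) \<Rightarrow>
   word set \<times> word set \<times> (word \<times> word) set \<Rightarrow> bool" where
  "Inv n k H prec s = (case s of (L, N, G) \<Rightarrow>
     L \<subseteq> words n \<and> N \<subseteq> words n \<and> (\<forall>a\<in>N. \<forall>b\<in>L. err_less prec a b) \<and>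
     (\<forall>a\<in>N. \<forall>b\<in>N. syndrome n k H a = syndrome n k H b \<longrightarrow> a = b) \<and>
     (\<forall>(u,u')\<in>G. u \<in> words n \<and> u' \<in> N \<and> err_less prec u' u \<and> syndrome n k H u' = syndrome n k H u))"

lemma inv_step:
  assumes adm: "admissible n prec" and st: "algR_step n k H prec s s'" and inv: "Inv n k H prec s"
  shows "Inv n k H prec s'"
  using st
proof cases
  case (discard w L G N)
  have "Inv n k H prec (L, N, G)" using inv discard(1) by simp
  then have I: "L \<subseteq> words n" "N \<subseteq> words n" "\<forall>a\<in>N. \<forall>b\<in>L. err_less prec a b"
    "\<forall>a\<in>N. \<forall>b\<in>N. syndrome n k H a = syndrome n k H b \<longrightarrow> a = b"
    "\<forall>(u,u')\<in>G. u \<in> words n \<and> u' \<in> N \<and> err_less prec u' u \<and> syndrome n k H u' = syndrome n k H u"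
    unfolding Inv_def prod.case by blast+
  have "L - {w} \<subseteq> words n" "\<forall>a\<in>N. \<forall>b\<in>L - {w}. err_less prec a b" using I(1,3) by blast+
  then show ?thesis unfolding discard(2) Inv_def prod.case using I(2,4,5) by blast
next
  case (add_binomial w L G w' N)
  have "Inv n k H prec (L, N, G)" using inv add_binomial(1) by simp
  then have I: "L \<subseteq> words n" "N \<subseteq> words n" "\<forall>a\<in>N. \<forall>b\<in>L. err_less prec a b"
    "\<forall>a\<in>N. \<forall>b\<in>N. syndrome n k H a = syndrome n k H b \<longrightarrow> a = b"
    "\<forall>(u,u')\<in>G. u \<in> words n \<and> u' \<in> N \<and> err_less prec u' u \<and> syndrome n k H u' = syndrome n k H u"
    unfolding Inv_def prod.case by blast+
  have e: "err_less prec w' w" using I(3) add_binomial(3,6) by blast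
  have wW: "w \<in> words n" using I(1) add_binomial(3) by blast
  have "L - {w} \<subseteq> words n" "\<forall>a\<in>N. \<forall>b\<in>L - {w}. err_less prec a b" using I(1,3) by blast+
  moreover have "\<forall>(u,u')\<in>G \<union> {(w, w')}. u \<in> words n \<and> u' \<in> N \<and> err_less prec u' u \<and> syndrome n k H u' = syndrome n k H u"
    using I(5) e wW add_binomial(6,7) by blast
  ultimately show ?thesis unfolding add_binomial(2) Inv_def prod.case using I(2,4) by blast
next
  case (add_normal w L G N)
  have "Inv n k H prec (L, N, G)" using inv add_normal(1) by simp
  then have I: "L \<subseteq> words n" "N \<subseteq> words n" "\<forall>a\<in>N. \<forall>b\<in>L. err_less prec a b"
    "\<forall>a\<in>N. \<forall>b\<in>N. syndrome n k H a = syndrome n k H b \<longrightarrow> a = b"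
    "\<forall>(u,u')\<in>G. u \<in> words n \<and> u' \<in> N \<and> err_less prec u' u \<and> syndrome n k H u' = syndrome n k H u"
    unfolding Inv_def prod.case by blast+
  have wW: "w \<in> words n" using I(1) add_normal(3) by blast
  have newW: "\<And>i. i < n \<Longrightarrow> w + {#i#} \<in> words n" using wW by (auto simp: words_def)
  have L': "(L - {w}) \<union> {w + {#i#} | i. i < n} \<subseteq> words n" using I(1) newW by blast
  have lt: "\<forall>a\<in>N \<union> {w}. \<forall>b\<in>(L - {w}) \<union> {w + {#i#} | i. i < n}. err_less prec a b"
  proof (intro ballI)
    fix a b assume a: "a \<in> N \<union> {w}" and b: "b \<in> (L - {w}) \<union> {w + {#i#} | i. i < n}"
    show "err_less prec a b"
    proof (cases "b \<in> L - {w}")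
      case True
      show ?thesis
      proof (cases "a = w")
        case True2: True
        then show ?thesis using True add_normal(4) by blast
      next
        case False
        then show ?thesis using a True I(3) by blast
      qed
    next
      case False
      then obtain i where i: "i < n" "b = w + {#i#}" using b by blast
      have wb: "err_less prec w b" using err_less_add[OF adm wW i(1)] i(2) by simp
      show ?thesis
      proof (cases "a = w")
        case True then show ?thesis using wb by simp
      next
        case False
        then have aN: "a \<in> N" using a by blast
        then have aw: "err_less prec a w" using I(3) add_normal(3) by blast
        have "a \<in> words n" using aN I(2) by blast
        then show ?thesis using err_less_trans[OF adm _ wW _ aw wb] newW i by blast
      qed
    qed
  qed
  have inj: "\<forall>a\<in>N \<union> {w}. \<forall>b\<in>N \<union> {w}. syndrome n k H a = syndrome n k H b \<longrightarrow> a = b"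
  proof (intro ballI impI)
    fix a b assume a: "a \<in> N \<union> {w}" and b: "b \<in> N \<union> {w}" and e: "syndrome n k H a = syndrome n k H b"
    show "a = b"
    proof (cases "a = w")
      case True
      show ?thesis
      proof (rule ccontr)
        assume "a \<noteq> b"
        then have "b \<in> N" using b True by simp
        then show False using add_normal(6) e True by auto
      qed
    next
      case False
      then have aN: "a \<in> N" using a by simp
      show ?thesis
      proof (cases "b = w")
        case True
        then show ?thesis using add_normal(6) e aN by auto
      next
        case False
        then have "b \<in> N" using b by simp
        then show ?thesis using I(4) aN e by blast
      qed
    qed
  qed
  have N': "N \<union> {w} \<subseteq> words n" using I(2) wW by blast
  have G': "\<forall>(u,u')\<in>G. u \<in> words n \<and> u' \<in> N \<union> {w} \<and> err_less prec u' u \<and> syndrome n k H u' = syndrome n k H u"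
    using I(5) by blast
  show ?thesis unfolding Inv_def using add_normal(2) L' lt inj N' G' by (simp only: prod.case)
qed

lemma inv_reach:
  assumes adm: "admissible n prec" and r: "(algR_step n k H prec)\<^sup>*\<^sup>* ({{#}}, {}, {}) s"
  shows "Inv n k H prec s"
  using r
proof (induction rule: rtranclp_induct)
  case base
  then show ?case by (simp add: Inv_def words_def)
next
  case (step y z)
  then show ?case using inv_step[OF adm] by blast
qed

definition Cov :: "word set \<Rightarrow> (word \<times> word) set \<Rightarrow> word \<Rightarrow> bool" where
  "Cov Nf Gf w \<longleftrightarrow> w \<in> Nf \<or> (\<exists>(u,u')\<in>Gf. u \<subseteq># w)"

definition Back :: "nat \<Rightarrow> word set \<Rightarrow> (word \<times> word) set \<Rightarrow>
   word set \<times> word set \<times> (word \<times> word) set \<Rightarrow> bool" where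
  "Back n Nf Gf s = (case s of (L, N, G) \<Rightarrow>
     N \<subseteq> Nf \<and> G \<subseteq> Gf \<and> (\<forall>w\<in>L. Cov Nf Gf w) \<and> (\<forall>v\<in>Nf - N. \<forall>i<n. Cov Nf Gf (v + {#i#})))"

lemma back_step:
  assumes st: "algR_step n k H prec s s'" and b: "Back n Nf Gf s'"
  shows "Back n Nf Gf s"
  using st
proof cases
  case (discard w L G N)
  have B: "N \<subseteq> Nf" "G \<subseteq> Gf" "\<forall>x\<in>L-{w}. Cov Nf Gf x" "\<forall>v\<in>Nf - N. \<forall>i<n. Cov Nf Gf (v+{#i#})"
    using b discard by (simp_all add: Back_def)
  have "Cov Nf Gf w" using discard(5) B(2) unfolding Cov_def by blast
  then have "\<forall>x\<in>L. Cov Nf Gf x" using B(3) by blast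
  then show ?thesis using discard B by (simp add: Back_def)
next
  case (add_binomial w L G w' N)
  have B: "N \<subseteq> Nf" "G \<union> {(w, w')} \<subseteq> Gf" "\<forall>x\<in>L-{w}. Cov Nf Gf x" "\<forall>v\<in>Nf - N. \<forall>i<n. Cov Nf Gf (v+{#i#})"
    using b add_binomial by (simp_all add: Back_def)
  have "Cov Nf Gf w" using B(2) unfolding Cov_def by blast
  then have "\<forall>x\<in>L. Cov Nf Gf x" using B(3) by blast
  moreover have "G \<subseteq> Gf" using B(2) by blast
  ultimately show ?thesis using add_binomial B by (simp add: Back_def)
next
  case (add_normal w L G N)
  have B: "N \<union> {w} \<subseteq> Nf" "G \<subseteq> Gf" "\<forall>x\<in>(L - {w}) \<union> {w + {#i#} | i. i < n}. Cov Nf Gf x"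
    "\<forall>v\<in>Nf - (N \<union> {w}). \<forall>i<n. Cov Nf Gf (v+{#i#})"
    using b add_normal by (simp_all add: Back_def)
  have "Cov Nf Gf w" using B(1) unfolding Cov_def by blast
  then have c1: "\<forall>x\<in>L. Cov Nf Gf x" using B(3) by blast
  have c2: "\<forall>v\<in>Nf - N. \<forall>i<n. Cov Nf Gf (v+{#i#})"
  proof (intro ballI allI impI)
    fix v i assume v: "v \<in> Nf - N" and i: "i < n"
    show "Cov Nf Gf (v+{#i#})"
    proof (cases "v = w")
      case True then show ?thesis using B(3) i by blast
    next
      case False then show ?thesis using B(4) v i by blast
    qed
  qed
  have "N \<subseteq> Nf" using B(1) by blast
  then show ?thesis using add_normal B(2) c1 c2 by (simp add: Back_def)
qed

lemma back_reach:
  assumes r: "(algR_step n k H prec)\<^sup>*\<^sup>* s ({}, Nf, Gf)"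
  shows "Back n Nf Gf s"
  using r
proof (induction rule: converse_rtranclp_induct)
  case base
  then show ?case by (simp add: Back_def)
next
  case (step y z)
  then show ?case using back_step by blast
qed

lemma irr_in_N:
  assumes cov0: "Cov Nf Gf {#}" and covs: "\<forall>v\<in>Nf. \<forall>i<n. Cov Nf Gf (v + {#i#})"
  shows "w \<in> words n \<Longrightarrow> \<not> (\<exists>(u,u')\<in>Gf. u \<subseteq># w) \<Longrightarrow> w \<in> Nf"
proof (induction w)
  case empty
  then show ?case using cov0 by (auto simp: Cov_def)
next
  case (add x M)
  have "M \<in> words n" using add.prems(1) by (auto simp: words_def)
  moreover have "\<not> (\<exists>(u,u')\<in>Gf. u \<subseteq># M)"
  proof
    assume "\<exists>(u,u')\<in>Gf. u \<subseteq># M"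
    then obtain u u' where "(u,u') \<in> Gf" "u \<subseteq># M" by blast
    moreover have "M \<subseteq># add_mset x M" by simp
    ultimately show False using add.prems(2) subset_mset.order_trans by blast
  qed
  ultimately have "M \<in> Nf" using add.IH by blast
  moreover have "x < n" using add.prems(1) by (auto simp: words_def)
  ultimately have "Cov Nf Gf (M + {#x#})" using covs by blast
  then show ?case using add.prems(2) by (auto simp: Cov_def)
qed

lemma wf_err:
  assumes adm: "admissible n prec"
  shows "wf {(a, b). a \<in> words n \<and> b \<in> words n \<and> err_less prec a b}"
proof -
  let ?P = "{(u, v). u \<in> words n \<and> v \<in> words n \<and> prec u v}"
  have wP: "wf ?P" using adm unfolding admissible_def by blast
  have "wf (inv_image (less_than <*lex*> ?P) (\<lambda>w. (card (set_mset w), w)))"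
    using wP by (intro wf_inv_image wf_lex_prod wf_less_than)
  moreover have "{(a, b). a \<in> words n \<and> b \<in> words n \<and> err_less prec a b}
     \<subseteq> inv_image (less_than <*lex*> ?P) (\<lambda>w. (card (set_mset w), w))"
    by (auto simp: err_less_def)
  ultimately show ?thesis by (rule wf_subset)
qed

lemma std_sub: "std_form w \<subseteq># w"
  unfolding subseteq_mset_def count_std
  by (metis One_nat_def Suc_leI odd_pos zero_le)

lemma red_dec:
  assumes adm: "admissible n prec" and r: "red G w v" and wW: "w \<in> words n"
    and GI: "\<forall>(u,u')\<in>G. u' \<in> words n \<and> err_less prec u' u"
  shows "err_less prec v w"
  using r
proof cases
  case to_std
  have vW: "v \<in> words n" using red_words[OF r wW] GI by auto
  have sub: "set_mset v \<subseteq> set_mset w" using to_std set_std by simp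
  have le: "card (set_mset v) \<le> card (set_mset w)" using sub by (simp add: card_mono)
  have "v \<noteq> w"
  proof
    assume "v = w"
    have "count w i < 2" for i
    proof -
      have "count w i = count (std_form w) i" using \<open>v = w\<close> to_std by simp
      moreover have "count (std_form w) i < 2" by (simp add: count_std)
      ultimately show ?thesis by simp
    qed
    then have "standard w" unfolding standard_def by blast
    then show False using to_std by simp
  qed
  then have "prec v w" using prec_divides[OF adm vW wW] std_sub to_std by simp
  then show ?thesis using le unfolding err_less_def by auto
next
  case (by_G u u' s)
  have u'W: "u' \<in> words n" and el: "err_less prec u' u" using GI by_G by auto
  have sW: "s \<in> words n" "u \<in> words n" using wW by_G by (auto simp: words_def)
  have disj: "set_mset u \<inter> set_mset s = {}"
  proof (rule ccontr)
    assume "set_mset u \<inter> set_mset s \<noteq> {}"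
    then obtain i where "i \<in># u" "i \<in># s" by auto
    then have "count u i \<ge> 1" "count s i \<ge> 1" by (simp_all add: Suc_le_eq)
    moreover have "count w i = count u i + count s i" using by_G by simp
    ultimately have "count w i \<ge> 2" by linarith
    moreover have "standard w" using by_G by simp
    ultimately show False unfolding standard_def by (meson not_le)
  qed
  have cw: "card (set_mset w) = card (set_mset u) + card (set_mset s)"
    using by_G disj by (simp add: card_Un_disjoint)
  have cv: "card (set_mset v) \<le> card (set_mset u') + card (set_mset s)"
    using by_G by (simp add: card_Un_le)
  show ?thesis
  proof (cases "card (set_mset u') < card (set_mset u)")
    case True
    then show ?thesis using cw cv by (simp add: err_less_def)
  next
    case False
    then have "prec u' u" "card (set_mset u') = card (set_mset u)" using el by (auto simp: err_less_def)
    have mono: "\<forall>u\<in>words n. \<forall>v\<in>words n. \<forall>s\<in>words n. prec u v \<longrightarrow> prec (u + s) (v + s)"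
      using adm unfolding admissible_def by blast
    have "prec (u' + s) (u + s)" using mono u'W sW \<open>prec u' u\<close> by blast
    then have pv: "prec v w" using by_G by simp
    have le: "card (set_mset v) \<le> card (set_mset w)"
      using cw cv \<open>card (set_mset u') = card (set_mset u)\<close> by linarith
    show ?thesis
      by (cases "card (set_mset v) < card (set_mset w)") (use le pv in \<open>auto simp: err_less_def\<close>)
  qed
qed

lemma red_star_words:
  assumes "(red G)\<^sup>*\<^sup>* w v" "w \<in> words n" "\<forall>(u,u')\<in>G. u' \<in> words n"
  shows "v \<in> words n"
  using assms by (induction rule: rtranclp_induct) (auto intro: red_words)

lemma red_star_syn:
  assumes "(red G)\<^sup>*\<^sup>* w v" "\<forall>(u,u')\<in>G. syndrome n k H u' = syndrome n k H u"
  shows "syndrome n k H w = syndrome n k H v"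
  using assms by (induction rule: rtranclp_induct) (auto dest: red_syn)

theorem theorem3p5:
  fixes n k :: nat
    and H :: "nat \<Rightarrow> nat \<Rightarrow> bit"
    and C :: "(nat \<Rightarrow> bit) set"
    and prec :: "word \<Rightarrow> word \<Rightarrow> bool"
    and N :: "word set" and G :: "(word \<times> word) set"
  assumes "k \<le> n"
    and "C = {c. (\<forall>i\<ge>n. c i = 0) \<and> (\<forall>j<n - k. (\<Sum>i<n. c i * H i j) = 0)}"
    and "card C = 2 ^ k"
    and "admissible n prec"
    and "algR_output n k H prec N G"
  shows "(\<nexists>f. f 0 \<in> words n \<and> (\<forall>i. red G (f i) (f (Suc i))))
    \<and> (\<forall>w\<in>words n. \<forall>w1 w2. (red G)\<^sup>*\<^sup>* w w1 \<longrightarrow> (red G)\<^sup>*\<^sup>* w w2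
          \<longrightarrow> irreducible_word G w1 \<longrightarrow> irreducible_word G w2 \<longrightarrow> w1 = w2)
    \<and> (\<forall>w\<in>words n. irreducible_word G w \<longrightarrow> w \<in> N)
    \<and> (\<forall>w\<in>words n. \<forall>w'. (red G)\<^sup>*\<^sup>* w w' \<longrightarrow> syndrome n k H w = syndrome n k H w')"
proof -
  note adm = assms(4)
  have run: "(algR_step n k H prec)\<^sup>*\<^sup>* ({{#}}, {}, {}) ({}, N, G)"
    using assms(5) by (simp add: algR_output_def)
  have I: "N \<subseteq> words n"
    "\<forall>a\<in>N. \<forall>b\<in>N. syndrome n k H a = syndrome n k H b \<longrightarrow> a = b"
    "\<forall>(u,u')\<in>G. u \<in> words n \<and> u' \<in> N \<and> err_less prec u' u \<and> syndrome n k H u' = syndrome n k H u"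
    using inv_reach[OF adm run] by (auto simp: Inv_def)
  have GW: "\<forall>(u,u')\<in>G. u' \<in> words n" using I(1) I(3) by auto
  have GE: "\<forall>(u,u')\<in>G. u' \<in> words n \<and> err_less prec u' u" using I(1) I(3) by auto
  have GS: "\<forall>(u,u')\<in>G. syndrome n k H u' = syndrome n k H u" using I(3) by auto
  have B: "Back n N G ({{#}}, {}, {})" using back_reach[OF run] .
  have cov0: "Cov N G {#}" and covs: "\<forall>v\<in>N. \<forall>i<n. Cov N G (v + {#i#})"
    using B by (auto simp: Back_def)
  have P3: "\<forall>w\<in>words n. irreducible_word G w \<longrightarrow> w \<in> N"
  proof (intro ballI impI)
    fix w assume "w \<in> words n" "irreducible_word G w"
    then show "w \<in> N" using irr_in_N[OF cov0 covs, of w] unfolding irreducible_iff by simp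
  qed
  have P4: "\<forall>w\<in>words n. \<forall>w'. (red G)\<^sup>*\<^sup>* w w' \<longrightarrow> syndrome n k H w = syndrome n k H w'"
  proof (intro ballI allI impI)
    fix w w' assume "w \<in> words n" "(red G)\<^sup>*\<^sup>* w w'"
    then show "syndrome n k H w = syndrome n k H w'" using red_star_syn[OF _ GS] by simp
  qed
  have P2: "\<forall>w\<in>words n. \<forall>w1 w2. (red G)\<^sup>*\<^sup>* w w1 \<longrightarrow> (red G)\<^sup>*\<^sup>* w w2
          \<longrightarrow> irreducible_word G w1 \<longrightarrow> irreducible_word G w2 \<longrightarrow> w1 = w2"
  proof (intro ballI allI impI)
    fix w w1 w2 assume w: "w \<in> words n" and r1: "(red G)\<^sup>*\<^sup>* w w1" and r2: "(red G)\<^sup>*\<^sup>* w w2"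
      and i1: "irreducible_word G w1" and i2: "irreducible_word G w2"
    have "w1 \<in> N" using P3 red_star_words[OF r1 w GW] i1 by simp
    moreover have "w2 \<in> N" using P3 red_star_words[OF r2 w GW] i2 by simp
    moreover have "syndrome n k H w1 = syndrome n k H w2" using P4 w r1 r2 by (metis (no_types))
    ultimately show "w1 = w2" using I(2) by blast
  qed
  have P1: "\<nexists>f. f 0 \<in> words n \<and> (\<forall>i. red G (f i) (f (Suc i)))"
  proof
    assume "\<exists>f. f 0 \<in> words n \<and> (\<forall>i. red G (f i) (f (Suc i)))"
    then obtain f where f0: "f 0 \<in> words n" and fr: "\<forall>i. red G (f i) (f (Suc i))" by blast
    have fw: "f i \<in> words n" for i
    proof (induction i)
      case 0 show ?case by (rule f0)
    next
      case (Suc i) show ?case using red_words[OF spec[OF fr, of i] Suc GW] .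
    qed
    have "\<forall>i. (f (Suc i), f i) \<in> {(a, b). a \<in> words n \<and> b \<in> words n \<and> err_less prec a b}"
    proof
      fix i show "(f (Suc i), f i) \<in> {(a, b). a \<in> words n \<and> b \<in> words n \<and> err_less prec a b}"
        using fw[of i] fw[of "Suc i"] red_dec[OF adm spec[OF fr, of i] fw[of i] GE] by simp
    qed
    then show False using wf_err[OF adm] unfolding wf_iff_no_infinite_down_chain by blast
  qed
  show ?thesis using P1 P2 P3 P4 by (intro conjI)
qed

end
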